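(* Let $a\ge1$ be an integer with $a^dq>1$. For $l=1,2,\dots$ let $L_l=\{x\in\mathbb{R}^d: a^{(l-1)^d}<|x|<a^{l^d}\}$. Then $P$-almost surely there exists $l_0(\omega)$ such that for every $l\ge l_0(\omega)$ the layer $L_l$ contains a cube $Q(l,n)$ (entirely inside $L_l$) on which $V(x,\omega)=0$.
   Context: For $k\in\mathbb{Z}^d$ let $Q_k=\{x\in\mathbb{R}^d:\|x-k\|_\infty\le1/2\}$, let $(\varepsilon_k)$ be i.i.d. with $P\{\varepsilon_k=1\}=p>0$, $P\{\varepsilon_k=0\}=q=1-p>0$, and $V(x,\omega)=\sum_k\varepsilon_kI_{Q_k}(x)$. For an integer $l\ge1$, $Q(l,n)$, $n\in\mathbb{Z}^d$, are cubes of edge length $l$ partitioning $\mathbb{R}^d$, each a union of $l^d$ unit cubes $Q_k$ (so that $V=0$ on $Q(l,n)$ iff all its $l^d$ unit cubes have $\varepsilon_k=0$). *)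

theory Defs
  imports "HOL-Probability.Probability"
begin

definition unit_cube :: "int^'d \<Rightarrow> (real^'d) set" where
  "unit_cube k = {x. \<forall>i. \<bar>x$i - real_of_int (k$i)\<bar> \<le> 1/2}"

text \<open>The random potential V(x,omega) = sum_k eps_k(omega) I_{Q_k}(x); only finitely many
  Q_k contain a given x, so the sum is over the finite set of such k.\<close>
definition potential :: "(int^'d \<Rightarrow> 'w \<Rightarrow> nat) \<Rightarrow> real^'d \<Rightarrow> 'w \<Rightarrow> real" where
  "potential \<epsilon> x \<omega> = (\<Sum>k\<in>{k. x \<in> unit_cube k}. real (\<epsilon> k \<omega>))"

text \<open>The lattice indices of the l^d unit cubes forming Q(l,n): the cube of edge length l
  whose lowest unit cube is Q_{l n}. These cubes (n ranging over Z^d) partition R^d.\<close>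
definition cells :: "nat \<Rightarrow> int^'d \<Rightarrow> (int^'d) set" where
  "cells l n = {k. \<forall>i. int l * n$i \<le> k$i \<and> k$i < int l * n$i + int l}"

definition big_cube :: "nat \<Rightarrow> int^'d \<Rightarrow> (real^'d) set" where
  "big_cube l n = (\<Union>k\<in>cells l n. unit_cube k)"

text \<open>"V = 0 on Q(l,n)", with the convention fixed in the paper: all l^d unit cubes of
  Q(l,n) have eps_k = 0.\<close>
definition V_zero_on :: "(int^'d \<Rightarrow> 'w \<Rightarrow> nat) \<Rightarrow> nat \<Rightarrow> int^'d \<Rightarrow> 'w \<Rightarrow> bool" where
  "V_zero_on \<epsilon> l n \<omega> \<longleftrightarrow> (\<forall>k\<in>cells l n. \<epsilon> k \<omega> = 0)"

definition layer :: "int \<Rightarrow> nat \<Rightarrow> (real^'d) set" where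
  "layer a l = {x. real_of_int a ^ ((l - 1) ^ CARD('d)) < norm x
                   \<and> norm x < real_of_int a ^ (l ^ CARD('d))}"

end

theory Submission
  imports Defs
begin

lemma pow_gap:
  fixes l d :: nat
  assumes "l \<ge> 1" "d \<ge> 1"
  shows "(l - 1) ^ d + l ^ (d - 1) \<le> l ^ d"
proof -
  have "(l - 1) ^ d = (l - 1) * (l - 1) ^ (d - 1)" using assms
    by (metis Suc_diff_1 less_le_trans zero_less_one power_Suc)
  also have "\<dots> \<le> (l - 1) * l ^ (d - 1)" by (intro mult_left_mono power_mono) auto
  finally have "(l - 1) ^ d + l ^ (d - 1) \<le> (l - 1) * l ^ (d - 1) + l ^ (d - 1)" by simp
  also have "\<dots> = l * l ^ (d - 1)" using assms by (simp add: algebra_simps)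
  also have "\<dots> = l ^ d" using assms by (metis Suc_diff_1 less_le_trans zero_less_one power_Suc)
  finally show ?thesis .
qed

lemma bern_bound:
  fixes s :: real
  assumes "0 \<le> s" "s \<le> 1"
  shows "(1 - s) ^ N * (1 + real N * s) \<le> 1"
proof -
  have "1 + real N * s \<le> (1 + s) ^ N" using assms by (intro Bernoulli_inequality) simp
  hence "(1 - s) ^ N * (1 + real N * s) \<le> (1 - s) ^ N * (1 + s) ^ N"
    using assms by (intro mult_left_mono) auto
  also have "\<dots> = (1 - s * s) ^ N" by (simp add: power_mult_distrib[symmetric] algebra_simps)
  also have "\<dots> \<le> 1" using assms by (intro power_le_one) (auto simp: mult_le_one)
  finally show ?thesis .
qed


lemma card_box:
  fixes A :: "'d::finite \<Rightarrow> int set"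
  shows "card {k::int^'d. \<forall>i. k$i \<in> A i} = (\<Prod>i\<in>UNIV. card (A i))"
proof -
  have "bij_betw vec_nth {k::int^'d. \<forall>i. k$i \<in> A i} (PiE UNIV A)"
    unfolding bij_betw_def
  proof
    show "inj_on vec_nth {k::int^'d. \<forall>i. k$i \<in> A i}" by (auto simp: inj_on_def vec_eq_iff)
    show "vec_nth ` {k::int^'d. \<forall>i. k$i \<in> A i} = PiE UNIV A"
    proof
      show "vec_nth ` {k::int^'d. \<forall>i. k$i \<in> A i} \<subseteq> PiE UNIV A" by auto
      show "PiE UNIV A \<subseteq> vec_nth ` {k::int^'d. \<forall>i. k$i \<in> A i}"
      proof
        fix f assume "f \<in> PiE UNIV A"
        then show "f \<in> vec_nth ` {k::int^'d. \<forall>i. k$i \<in> A i}"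
          by (intro image_eqI[of _ _ "vec_lambda f"]) (auto simp: vec_lambda_inverse)
      qed
    qed
  qed
  then have "card {k::int^'d. \<forall>i. k$i \<in> A i} = card (PiE UNIV A)" by (rule bij_betw_same_card)
  also have "\<dots> = (\<Prod>i\<in>UNIV. card (A i))" by (simp add: card_PiE)
  finally show ?thesis .
qed

lemma finite_box:
  fixes A :: "'d::finite \<Rightarrow> int set"
  assumes "\<And>i. finite (A i)"
  shows "finite {k::int^'d. \<forall>i. k$i \<in> A i}"
proof -
  have "{k::int^'d. \<forall>i. k$i \<in> A i} \<subseteq> vec_lambda ` PiE UNIV A"
  proof
    fix k :: "int^'d" assume "k \<in> {k::int^'d. \<forall>i. k$i \<in> A i}"
    then show "k \<in> vec_lambda ` PiE UNIV A"
      by (intro image_eqI[of _ _ "vec_nth k"]) auto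
  qed
  moreover have "finite (PiE UNIV A)" using assms by (simp add: finite_PiE)
  ultimately show ?thesis by (meson finite_imageI finite_subset)
qed

lemma cells_box: "cells l n = {k. \<forall>i. k$i \<in> {int l * n$i ..< int l * n$i + int l}}"
  by (auto simp: cells_def)

lemma card_cells: "card (cells l (n::int^'d)) = l ^ CARD('d)"
  unfolding cells_box card_box by simp

lemma finite_cells: "finite (cells l (n::int^'d))"
  unfolding cells_box by (rule finite_box) simp

lemma cells_nonempty: "l \<ge> 1 \<Longrightarrow> cells l (n::int^'d) \<noteq> {}"
  using card_cells[of l n] by (metis card.empty not_one_le_zero power_eq_0_iff le_zero_eq)

lemma cells_disjoint:
  assumes "l \<ge> 1" "n \<noteq> n'"
  shows "cells l (n::int^'d) \<inter> cells l n' = {}"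
proof (rule ccontr)
  assume "cells l n \<inter> cells l n' \<noteq> {}"
  then obtain k where k: "k \<in> cells l n" "k \<in> cells l n'" by blast
  from assms(2) obtain i where i: "n$i \<noteq> n'$i" by (auto simp: vec_eq_iff)
  have L: "int l \<ge> 1" using assms by simp
  have h: "int l * n$i \<le> k$i" "k$i < int l * n$i + int l"
          "int l * n'$i \<le> k$i" "k$i < int l * n'$i + int l"
    using k by (auto simp: cells_def)
  show False
  proof (cases "n$i < n'$i")
    case True
    then have "int l * (n$i + 1) \<le> int l * n'$i" using L by (intro mult_left_mono) auto
    then show False using h by (simp add: algebra_simps)
  next
    case False
    then have "n'$i < n$i" using i by simp
    then have "int l * (n'$i + 1) \<le> int l * n$i" using L by (intro mult_left_mono) auto
    then show False using h by (simp add: algebra_simps)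
  qed
qed



lemma big_cube_layer:
  fixes n :: "int^'d" and c K a :: int
  assumes l: "l \<ge> 1"
    and a: "a \<ge> 1"
    and lo: "\<And>i. c \<le> n$i" and hi: "\<And>i. n$i < c + K"
    and c1: "real_of_int a ^ ((l - 1) ^ CARD('d)) < real l * real_of_int c - 1/2"
    and c2: "real CARD('d) * (real l * real_of_int (c + K)) < real_of_int a ^ (l ^ CARD('d))"
  shows "big_cube l n \<subseteq> layer a l"
proof
  fix x assume "x \<in> big_cube l n"
  then obtain k where k: "k \<in> cells l n" and x: "x \<in> unit_cube k"
    by (auto simp: big_cube_def)
  have R1pos: "0 < real_of_int a ^ ((l - 1) ^ CARD('d))" using a by simp
  have bnd: "real_of_int a ^ ((l - 1) ^ CARD('d)) < x$i \<and> x$i < real l * real_of_int (c + K)" for i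
  proof -
    have xi: "\<bar>x$i - real_of_int (k$i)\<bar> \<le> 1/2" using x by (auto simp: unit_cube_def)
    have ki: "int l * n$i \<le> k$i" "k$i < int l * n$i + int l" using k by (auto simp: cells_def)
    have "int l * c \<le> int l * n$i" using lo[of i] by (intro mult_left_mono) auto
    hence "int l * c \<le> k$i" using ki by linarith
    hence "real_of_int (int l * c) \<le> real_of_int (k$i)" by (simp only: of_int_le_iff)
    hence A: "real l * real_of_int c \<le> real_of_int (k$i)" by simp
    have "int l * n$i \<le> int l * (c + K - 1)" using hi[of i] by (intro mult_left_mono) auto
    hence "k$i + 1 \<le> int l * (c + K)" using ki by (simp add: algebra_simps)
    hence "real_of_int (k$i + 1) \<le> real_of_int (int l * (c + K))" by (simp only: of_int_le_iff)
    hence B: "real_of_int (k$i) + 1 \<le> real l * real_of_int (c + K)" by simp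
    have "x$i - real_of_int (k$i) \<le> 1/2" "real_of_int (k$i) - x$i \<le> 1/2" using xi unfolding abs_le_iff by linarith+
    then show ?thesis using A B c1 by linarith
  qed
  obtain i0 :: 'd where True by simp
  have "real_of_int a ^ ((l - 1) ^ CARD('d)) < \<bar>x$i0\<bar>" using bnd[of i0] by auto
  also have "\<dots> \<le> norm x" by (rule component_le_norm_cart)
  finally have lower: "real_of_int a ^ ((l - 1) ^ CARD('d)) < norm x" .
  have "norm x \<le> (\<Sum>i\<in>UNIV. \<bar>x$i\<bar>)" by (rule norm_le_l1_cart)
  also have "\<dots> < (\<Sum>i\<in>(UNIV::'d set). real l * real_of_int (c + K))"
  proof (rule sum_strict_mono)
    fix i :: 'd
    show "\<bar>x$i\<bar> < real l * real_of_int (c + K)" using bnd[of i] R1pos by linarith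
  qed auto
  also have "\<dots> < real_of_int a ^ (l ^ CARD('d))" using c2 by simp
  finally show "x \<in> layer a l" using lower by (simp add: layer_def)
qed


lemma (in prob_space) prob_no_good:
  fixes \<epsilon> :: "int^'d \<Rightarrow> 'a \<Rightarrow> nat"
  assumes indep: "indep_vars (\<lambda>_. count_space UNIV) \<epsilon> UNIV"
    and q: "\<And>k. prob {\<omega>\<in>space M. \<epsilon> k \<omega> = 0} = q"
    and l: "l \<ge> 1" and S: "finite S" "S \<noteq> {}"
  shows "{\<omega>\<in>space M. \<not>(\<exists>n\<in>S. V_zero_on \<epsilon> l n \<omega>)} \<in> events"
    and "prob {\<omega>\<in>space M. \<not>(\<exists>n\<in>S. V_zero_on \<epsilon> l n \<omega>)} = (1 - q ^ (l ^ CARD('d))) ^ card S"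
proof -
  have rv: "\<And>k. random_variable (count_space UNIV) (\<epsilon> k)"
    using indep by (auto simp: indep_vars_def)
  define Z where "Z n \<omega> = (\<forall>k\<in>cells l n. \<epsilon> k \<omega> = 0)" for n \<omega>
  have ind1: "indep_vars (\<lambda>n. PiM (cells l n) (\<lambda>_. count_space UNIV))
      (\<lambda>n \<omega>. restrict (\<lambda>k. \<epsilon> k \<omega>) (cells l n)) S"
    by (rule indep_vars_restrict[OF indep]) (auto simp: disjoint_family_on_def cells_disjoint[OF l])
  have meas: "(\<lambda>f. \<forall>k\<in>cells l n. f k = 0) \<in> measurable (PiM (cells l n) (\<lambda>_. count_space UNIV)) (count_space UNIV)"
    for n :: "int^'d"
    apply (rule pred_intros_finite(3)[OF finite_cells])
    subgoal for k
      apply (rule measurable_compose[OF measurable_component_singleton[of k], where g="\<lambda>x. x = 0"])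
      by auto
    done
  have ind2: "indep_vars (\<lambda>_. count_space UNIV)
      (\<lambda>n \<omega>. (\<lambda>f. \<forall>k\<in>cells l n. f k = 0) (restrict (\<lambda>k. \<epsilon> k \<omega>) (cells l n))) S"
    by (rule indep_vars_compose2[OF ind1 meas])
  have ind3: "indep_vars (\<lambda>_. count_space UNIV) Z S"
    using ind2 by (rule iffD1[OF indep_vars_cong, rotated 3]) (auto simp: Z_def)
  have rvZ: "n \<in> S \<Longrightarrow> random_variable (count_space UNIV) (Z n)" for n
    using ind3 by (auto simp: indep_vars_def)
  have Zev: "n \<in> S \<Longrightarrow> Z n -` A \<inter> space M \<in> events" for n A
    using measurable_sets[OF rvZ] by simp
  have eps0: "prob (\<epsilon> k -` {0} \<inter> space M) = q" for k
    using q[of k] by (simp add: vimage_def Int_def conj_commute)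
  have pT: "prob (Z n -` {True} \<inter> space M) = q ^ (l ^ CARD('d))" for n
  proof -
    have "Z n -` {True} \<inter> space M = (\<Inter>k\<in>cells l n. \<epsilon> k -` {0} \<inter> space M)"
      using cells_nonempty[OF l, of n] unfolding Z_def by blast
    hence "prob (Z n -` {True} \<inter> space M) = (\<Prod>k\<in>cells l n. prob (\<epsilon> k -` {0} \<inter> space M))"
      using indep_varsD[OF indep cells_nonempty[OF l] finite_cells, where A="\<lambda>_. {0}"] by simp
    also have "\<dots> = q ^ card (cells l n)" by (simp add: eps0)
    finally show ?thesis by (simp add: card_cells)
  qed
  have pF: "n \<in> S \<Longrightarrow> prob (Z n -` {False} \<inter> space M) = 1 - q ^ (l ^ CARD('d))" for n
  proof -
    assume n: "n \<in> S"
    have "Z n -` {False} \<inter> space M = space M - (Z n -` {True} \<inter> space M)" by auto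
    then show ?thesis using prob_compl[OF Zev[OF n, of "{True}"]] pT[of n] by simp
  qed
  have bad: "{\<omega>\<in>space M. \<not>(\<exists>n\<in>S. V_zero_on \<epsilon> l n \<omega>)} = (\<Inter>n\<in>S. Z n -` {False} \<inter> space M)"
    using S(2) unfolding Z_def V_zero_on_def by blast
  show "{\<omega>\<in>space M. \<not>(\<exists>n\<in>S. V_zero_on \<epsilon> l n \<omega>)} \<in> events"
    unfolding bad using S Zev by (intro sets.finite_INT) auto
  have "prob (\<Inter>n\<in>S. Z n -` {False} \<inter> space M) = (\<Prod>n\<in>S. prob (Z n -` {False} \<inter> space M))"
    by (rule indep_varsD[OF ind3 S(2) S(1) order_refl]) simp
  also have "\<dots> = (1 - q ^ (l ^ CARD('d))) ^ card S" by (simp add: pF)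
  finally show "prob {\<omega>\<in>space M. \<not>(\<exists>n\<in>S. V_zero_on \<epsilon> l n \<omega>)} = (1 - q ^ (l ^ CARD('d))) ^ card S"
    unfolding bad .
qed

lemma poly_exp:
  fixes r C :: real and m :: nat
  assumes "r > 1"
  shows "\<forall>\<^sub>F l in sequentially. C * real l ^ m \<le> r ^ l"
proof -
  define b where "b = ln r"
  have b: "b > 0" using assms by (simp add: b_def)
  have lim: "(\<lambda>l. (b * real l) ^ m / exp (b * real l)) \<longlonglongrightarrow> 0"
    by (rule filterlim_compose[OF tendsto_power_div_exp_0])
       (intro filterlim_tendsto_pos_mult_at_top[OF tendsto_const b] filterlim_real_sequentially)
  have "b ^ m / (\<bar>C\<bar> + 1) > 0" using b by simp
  from order_tendstoD(2)[OF lim this]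
  have ev: "\<forall>\<^sub>F l in sequentially. (b * real l) ^ m / exp (b * real l) < b ^ m / (\<bar>C\<bar> + 1)" .
  show ?thesis
  proof (rule eventually_mono[OF ev])
    fix l assume h: "(b * real l) ^ m / exp (b * real l) < b ^ m / (\<bar>C\<bar> + 1)"
    have e: "exp (b * real l) = r ^ l"
      using assms by (simp add: b_def exp_of_nat_mult[symmetric] mult.commute)
         (metis exp_ln exp_of_nat_mult less_trans zero_less_one)
    have "(b ^ m * real l ^ m) * (\<bar>C\<bar> + 1) < b ^ m * exp (b * real l)"
      using h b by (simp add: field_simps power_mult_distrib)
    hence "real l ^ m * (\<bar>C\<bar> + 1) < exp (b * real l)"
      using b by (simp add: mult.assoc)
    moreover have "\<bar>C\<bar> * real l ^ m \<le> real l ^ m * (\<bar>C\<bar> + 1)" by (simp add: algebra_simps)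
    ultimately have "\<bar>C\<bar> * real l ^ m \<le> r ^ l" using e by linarith
    moreover have "C * real l ^ m \<le> \<bar>C\<bar> * real l ^ m" by (simp add: mult_right_mono)
    ultimately show "C * real l ^ m \<le> r ^ l" by linarith
  qed
qed

theorem mainTheorem11:
  fixes M :: "'w measure" and \<epsilon> :: "int^'d \<Rightarrow> 'w \<Rightarrow> nat"
    and p q :: real and a :: int
  assumes "prob_space M"
    and "prob_space.indep_vars M (\<lambda>_. count_space UNIV) \<epsilon> UNIV"
    and "\<And>k \<omega>. \<omega> \<in> space M \<Longrightarrow> \<epsilon> k \<omega> \<in> {0, 1}"
    and "\<And>k. measure M {\<omega> \<in> space M. \<epsilon> k \<omega> = 1} = p"
    and "\<And>k. measure M {\<omega> \<in> space M. \<epsilon> k \<omega> = 0} = q"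
    and "p > 0" and "q > 0" and "q = 1 - p"
    and "a \<ge> 1" and "real_of_int a ^ CARD('d) * q > 1"
  shows "AE \<omega> in M. \<exists>l0::nat. \<forall>l\<ge>l0. l \<ge> 1 \<longrightarrow>
           (\<exists>n. big_cube l n \<subseteq> layer a l \<and> V_zero_on \<epsilon> l n \<omega>)"
proof -
  interpret prob_space M by fact
  note indep = assms(2)
  define d where "d = CARD('d)"
  have d1: "d \<ge> 1" unfolding d_def by (simp add: Suc_leI)
  have q1: "q < 1" "q > 0" using assms(6,7,8) by auto
  have a2: "a \<ge> 2"
  proof (rule ccontr)
    assume "\<not> a \<ge> 2" hence "a = 1" using assms(9) by simp
    thus False using assms(10) q1 by simp
  qed
  define r where "r = real_of_int a ^ d * q"
  have r1: "r > 1" using assms(10) by (simp add: r_def d_def)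
  define R1 where "R1 l = real_of_int a ^ ((l - 1) ^ d)" for l :: nat
  define R2 where "R2 l = real_of_int a ^ (l ^ d)" for l :: nat
  define c where "c l = \<lfloor>(R1 l + 1) / real l\<rfloor> + 1" for l :: nat
  define K where "K l = \<lceil>R2 l / (real d * real l)\<rceil> - 1 - c l" for l :: nat
  define S where "S l = {n::int^'d. \<forall>i. n$i \<in> {c l ..< c l + K l}}" for l :: nat
  have geo: "big_cube l n \<subseteq> layer a l" if l: "l \<ge> 1" and n: "n \<in> S l" for l n
  proof (rule big_cube_layer[OF l assms(9)])
    show "\<And>i. c l \<le> n$i" "\<And>i. n$i < c l + K l" using n by (auto simp: S_def)
    have lpos: "real l > 0" using l by simp
    have "(R1 l + 1) / real l < real_of_int (c l)"
      unfolding c_def using floor_less_iff[of "(R1 l + 1) / real l" "\<lfloor>(R1 l + 1) / real l\<rfloor> + 1"] by simp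
    hence "R1 l + 1 < real l * real_of_int (c l)" using lpos by (simp add: field_simps)
    thus "real_of_int a ^ ((l - 1) ^ CARD('d)) < real l * real_of_int (c l) - 1/2"
      by (simp add: R1_def d_def)
    have dl: "real d * real l > 0" using lpos d1 by simp
    have "real_of_int (c l + K l) < R2 l / (real d * real l)"
      unfolding K_def using ceiling_correct[of "R2 l / (real d * real l)"] by simp
    hence "real d * real l * real_of_int (c l + K l) < R2 l" using dl by (simp add: field_simps)
    thus "real CARD('d) * (real l * real_of_int (c l + K l)) < real_of_int a ^ (l ^ CARD('d))"
      by (simp add: R2_def d_def mult.assoc)
  qed
  have finS: "finite (S l)" for l unfolding S_def by (rule finite_box) simp
  have cardS: "card (S l) = nat (K l) ^ d" for l
    unfolding S_def card_box d_def by simp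

  have ev: "\<forall>\<^sub>F l in sequentially. 2 * real d * real l ^ 0 \<le> 2 ^ l \<and>
      12 * real d * real l ^ 1 \<le> 2 ^ l \<and> (4 * real d) ^ d * real l ^ (d + 2) \<le> r ^ l"
    by (intro eventually_conj poly_exp r1) auto
  then obtain L0 where L0: "\<And>l. l \<ge> L0 \<Longrightarrow> 2 * real d * real l ^ 0 \<le> 2 ^ l \<and>
      12 * real d * real l ^ 1 \<le> 2 ^ l \<and> (4 * real d) ^ d * real l ^ (d + 2) \<le> r ^ l"
    by (auto simp: eventually_sequentially)
  define L where "L = max L0 1"
  have key: "real l ^ 2 \<le> real (card (S l)) * q ^ (l ^ d)" if lL: "l \<ge> L" for l
  proof -
    have l: "l \<ge> 1" using lL by (simp add: L_def)
    have E1: "2 * real d \<le> 2 ^ l" and E2: "12 * real d * real l \<le> 2 ^ l"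
      and E3: "(4 * real d) ^ d * real l ^ (d + 2) \<le> r ^ l"
      using L0[of l] lL by (auto simp: L_def)
    have lpos: "real l > 0" using l by simp
    have dpos: "real d > 0" using d1 by simp
    have gap: "(l - 1) ^ d + l ^ (d - 1) \<le> l ^ d" by (rule pow_gap[OF l d1])
    have A2: "2 * real d \<le> real_of_int a ^ (l ^ (d - 1))"
    proof -
      have "2 * real d \<le> 2 ^ (l ^ (d - 1))"
      proof (cases "d = 1")
        case True thus ?thesis by simp
      next
        case False
        hence "l ^ 1 \<le> l ^ (d - 1)" using l d1 by (intro power_increasing) auto
        hence "(2::real) ^ l \<le> 2 ^ (l ^ (d - 1))" by (intro power_increasing) auto
        with E1 show ?thesis by linarith
      qed
      also have "\<dots> \<le> real_of_int a ^ (l ^ (d - 1))" using a2 by (intro power_mono) auto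
      finally show ?thesis .
    qed
    have R1nn: "R1 l \<ge> 0" using assms(9) by (simp add: R1_def)
    have "R1 l * real_of_int a ^ (l ^ (d - 1)) = real_of_int a ^ ((l - 1) ^ d + l ^ (d - 1))"
      by (simp add: R1_def power_add)
    also have "\<dots> \<le> R2 l" unfolding R2_def using gap a2 by (intro power_increasing) auto
    finally have "R1 l * real_of_int a ^ (l ^ (d - 1)) \<le> R2 l" .
    moreover have "R1 l * (2 * real d) \<le> R1 l * real_of_int a ^ (l ^ (d - 1))"
      using A2 R1nn by (intro mult_left_mono)
    ultimately have R12: "R1 l * (2 * real d) \<le> R2 l" by linarith
    have lld: "l \<le> l ^ d" using l d1 by (metis power_increasing power_one_right)
    have "(2::real) ^ l \<le> 2 ^ (l ^ d)" using lld by (intro power_increasing) auto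
    also have "\<dots> \<le> R2 l" unfolding R2_def using a2 by (intro power_mono) auto
    finally have R2big: "12 * real d * real l \<le> R2 l" using E2 by linarith
    define X where "X = R2 l / (real d * real l)"
    have X12: "12 \<le> X" unfolding X_def using R2big lpos dpos by (simp add: field_simps)
    have R1X: "R1 l / real l \<le> X / 2" unfolding X_def using R12 lpos dpos by (simp add: field_simps)
    have il: "1 / real l \<le> 1" using l by simp
    have cl: "real_of_int (c l) \<le> R1 l / real l + 1 / real l + 1"
      unfolding c_def using of_int_floor_le[of "(R1 l + 1) / real l"] by (simp add: add_divide_distrib)
    have Kl: "X - 1 - real_of_int (c l) \<le> real_of_int (K l)"
      unfolding K_def X_def using ceiling_correct[of "R2 l / (real d * real l)"] by simp
    define B where "B = X / 4"
    have KB: "B \<le> real_of_int (K l)" using Kl cl R1X il X12 by (simp add: B_def)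
    have B0: "0 \<le> B" using X12 by (simp add: B_def)
    have K0: "K l \<ge> 0" using KB B0 by linarith
    have cardr: "real (card (S l)) = real_of_int (K l) ^ d"
      using K0 by (simp add: cardS)
    have "B ^ d \<le> real_of_int (K l) ^ d" using KB B0 by (intro power_mono)
    hence F1: "B ^ d * q ^ (l ^ d) \<le> real (card (S l)) * q ^ (l ^ d)"
      using q1 by (simp add: cardr mult_right_mono)
    have F2: "B ^ d * q ^ (l ^ d) = r ^ (l ^ d) / (4 * real d * real l) ^ d"
    proof -
      have "B = R2 l / (4 * real d * real l)" by (simp add: B_def X_def)
      hence F1: "B ^ d = R2 l ^ d / (4 * real d * real l) ^ d" by (simp add: power_divide)
      moreover have "R2 l ^ d = (real_of_int a ^ d) ^ (l ^ d)"
        by (simp add: R2_def power_mult[symmetric] mult.commute)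
      moreover have "r ^ (l ^ d) = (real_of_int a ^ d) ^ (l ^ d) * q ^ (l ^ d)"
        by (simp add: r_def power_mult_distrib)
      ultimately show ?thesis by simp
    qed
    have F3: "r ^ l \<le> r ^ (l ^ d)" using lld r1 by (intro power_increasing) auto
    have F4: "real l ^ 2 * (4 * real d * real l) ^ d \<le> r ^ l"
    proof -
      have "real l ^ 2 * (4 * real d * real l) ^ d = (4 * real d) ^ d * real l ^ (d + 2)"
        by (simp add: power_mult_distrib power_add power2_eq_square)
      thus ?thesis using E3 by simp
    qed
    have Dpos: "(4 * real d * real l) ^ d > 0" using lpos dpos by simp
    have "real l ^ 2 \<le> r ^ l / (4 * real d * real l) ^ d" using F4 Dpos by (simp add: pos_le_divide_eq)
    also have "\<dots> \<le> r ^ (l ^ d) / (4 * real d * real l) ^ d" using F3 Dpos by (simp add: divide_right_mono)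
    also have "\<dots> = B ^ d * q ^ (l ^ d)" using F2 by simp
    also have "\<dots> \<le> real (card (S l)) * q ^ (l ^ d)" by (rule F1)
    finally show ?thesis .
  qed
  define bad where "bad l = {\<omega>\<in>space M. \<not>(\<exists>n\<in>S l. V_zero_on \<epsilon> l n \<omega>)}" for l
  define A where "A l = (if L \<le> l then bad l else {})" for l
  have qd: "\<And>k. prob {\<omega>\<in>space M. \<epsilon> k \<omega> = 0} = q" using assms(5) by simp
  have Sne: "S l \<noteq> {}" if "L \<le> l" for l
  proof
    assume "S l = {}"
    hence "real l ^ 2 \<le> 0" using key[OF that] by simp
    moreover have "l \<ge> 1" using that by (simp add: L_def)
    ultimately show False by simp
  qed
  have lL1: "L \<le> l \<Longrightarrow> 1 \<le> l" for l by (simp add: L_def)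
  have Aev: "A l \<in> events" for l
    using prob_no_good(1)[OF indep qd lL1 finS Sne] by (simp add: A_def bad_def)
  have Ameas: "measure M (A l) \<le> inverse (real l ^ 2)" for l
  proof (cases "L \<le> l")
    case True
    define s where "s = q ^ (l ^ d)"
    define N where "N = card (S l)"
    have s01: "0 \<le> s" "s \<le> 1" using q1 by (auto simp: s_def power_le_one)
    have m: "measure M (A l) = (1 - s) ^ N"
      using prob_no_good(2)[OF indep qd lL1[OF True] finS Sne[OF True]] True
      by (simp add: A_def bad_def s_def N_def d_def)
    have k: "real l ^ 2 \<le> real N * s" using key[OF True] by (simp add: N_def s_def)
    have "(1 - s) ^ N * (real l ^ 2) \<le> (1 - s) ^ N * (1 + real N * s)"
      using k s01 by (intro mult_left_mono) auto
    also have "\<dots> \<le> 1" by (rule bern_bound[OF s01])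
    finally have "(1 - s) ^ N * real l ^ 2 \<le> 1" .
    moreover have "real l ^ 2 > 0" using lL1[OF True] by simp
    ultimately have "(1 - s) ^ N \<le> inverse (real l ^ 2)" by (simp add: field_simps)
    thus ?thesis using m by simp
  next
    case False thus ?thesis by (simp add: A_def)
  qed
  have summ: "summable (\<lambda>l. measure M (A l))"
  proof (rule summable_comparison_test)
    show "\<exists>N. \<forall>n\<ge>N. norm (measure M (A n)) \<le> inverse (real n ^ 2)" using Ameas by auto
    show "summable (\<lambda>n. inverse (real n ^ 2))" by (rule inverse_power_summable) simp
  qed
  have "AE \<omega> in M. eventually (\<lambda>l. \<omega> \<in> space M - A l) sequentially"
    by (rule borel_cantelli_AE1[OF Aev _ summ]) (simp add: less_top[symmetric])
  then show ?thesis
  proof (rule eventually_mono)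
    fix \<omega> assume "eventually (\<lambda>l. \<omega> \<in> space M - A l) sequentially"
    then obtain N0 where N0: "\<And>l. l \<ge> N0 \<Longrightarrow> \<omega> \<in> space M - A l" by (auto simp: eventually_sequentially)
    show "\<exists>l0::nat. \<forall>l\<ge>l0. l \<ge> 1 \<longrightarrow> (\<exists>n. big_cube l n \<subseteq> layer a l \<and> V_zero_on \<epsilon> l n \<omega>)"
    proof (intro exI[of _ "max N0 L"] allI impI)
      fix l assume l: "max N0 L \<le> l" "1 \<le> l"
      then have "\<omega> \<in> space M" "\<omega> \<notin> bad l" using N0[of l] by (auto simp: A_def)
      then obtain n where "n \<in> S l" "V_zero_on \<epsilon> l n \<omega>" by (auto simp: bad_def)
      thus "\<exists>n. big_cube l n \<subseteq> layer a l \<and> V_zero_on \<epsilon> l n \<omega>" using geo[OF l(2)] by blast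
    qed
  qed
qed

end
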